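(* Let $G$ be an index coding problem on $n$ messages, let $1\le n_1<n$, and let $G_1$ and $G_2$ be the subproblems induced on $[1:n_1]$ and $[n_1+1:n]$, with capacity regions $\mathscr{C}_1\subseteq\mathbb{R}^{n_1}$ and $\mathscr{C}_2\subseteq\mathbb{R}^{n-n_1}$. If $G$ has an edge from every node of $G_1$ to every node of $G_2$ and from every node of $G_2$ to every node of $G_1$ (i.e., $[n_1+1:n]\subseteq A_j$ for all $j\le n_1$ and $[1:n_1]\subseteq A_j$ for all $j>n_1$), then \[ \mathscr{C}=\bigl\{({\bf R}_1,{\bf R}_2): {\bf R}_1\in\mathscr{C}_1,\ {\bf R}_2\in\mathscr{C}_2\bigr\}=\mathscr{C}_1\times\mathscr{C}_2. \]
   Context: Index coding: an instance with $n$ messages is specified by side information sets $A_1,\ldots,A_n$ with $A_j\subseteq[1:n]\setminus\{j\}$, equivalently a directed side information graph $G$ on $[1:n]$ with an edge $i\to j$ iff $i\in A_j$. A $(t_1,\ldots,t_n,r)$ index code (with $t_j$ nonnegative integers, $r$ a positive integer) consists of an encoder $\phi:\prod_i\{0,1\}^{t_i}\to\{0,1\}^r$ and decoders $\psi_j:\{0,1\}^r\times\prod_{k\in A_j}\{0,1\}^{t_k}\to\{0,1\}^{t_j}$ with $\psi_j(\phi(x^n),(x_k)_{k\in A_j})=x_j$ for all message tuples $x^n$ and all $j$. A nonnegative rate tuple is achievable if $R_j\le t_j/r$ for all $j$ for some such code; the capacity region is the closure of the set of achievable rate tuples. The subproblem induced on a vertex subset $S$ is the index coding problem with messages indexed by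 $S$ and side information sets $A_j\cap S$, $j\in S$ (i.e., the vertex-induced subgraph $G[S]$). *)

theory Defs
  imports "HOL-Analysis.Analysis"
begin

text \<open>An index coding problem is given by a finite set S of message indices (natural numbers)
and side information sets A j (only A j \<inter> S matters, i.e. the problem induced on S).
Rate tuples are functions nat \<Rightarrow> real vanishing outside S; the capacity region is the
closure in the product topology (which on the finitely many coordinates in S is the
Euclidean topology).\<close>

definition restr :: "(nat \<Rightarrow> bool list) \<Rightarrow> nat set \<Rightarrow> nat \<Rightarrow> bool list" where
  "restr x B = (\<lambda>k. if k \<in> B then x k else [])"

definition msgs :: "nat set \<Rightarrow> (nat \<Rightarrow> nat) \<Rightarrow> (nat \<Rightarrow> bool list) set" where
  "msgs S t = {x. (\<forall>i\<in>S. length (x i) = t i) \<and> (\<forall>i. i \<notin> S \<longrightarrow> x i = [])}"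

definition index_code :: "nat set \<Rightarrow> (nat \<Rightarrow> nat set) \<Rightarrow> (nat \<Rightarrow> nat) \<Rightarrow> nat \<Rightarrow> bool" where
  "index_code S A t r \<longleftrightarrow>
     (\<exists>(phi :: (nat \<Rightarrow> bool list) \<Rightarrow> bool list)
        (psi :: nat \<Rightarrow> bool list \<Rightarrow> (nat \<Rightarrow> bool list) \<Rightarrow> bool list).
        \<forall>x\<in>msgs S t. length (phi x) = r \<and>
          (\<forall>j\<in>S. psi j (phi x) (restr x (A j \<inter> S)) = x j))"

definition achievable :: "nat set \<Rightarrow> (nat \<Rightarrow> nat set) \<Rightarrow> (nat \<Rightarrow> real) \<Rightarrow> bool" where
  "achievable S A R \<longleftrightarrow>
     (\<forall>j. j \<notin> S \<longrightarrow> R j = 0) \<and> (\<forall>j\<in>S. 0 \<le> R j) \<and>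
     (\<exists>t r. r > 0 \<and> index_code S A t r \<and> (\<forall>j\<in>S. R j \<le> real (t j) / real r))"

definition capacity :: "nat set \<Rightarrow> (nat \<Rightarrow> nat set) \<Rightarrow> (nat \<Rightarrow> real) set" where
  "capacity S A = closure {R. achievable S A R}"

end

theory Submission imports Defs begin

lemma concat_chunks:
  "m * t \<le> length xs \<Longrightarrow> concat (map (\<lambda>c. take t (drop (c*t) xs)) [0..<m]) = take (m*t) xs"
proof (induction m)
  case 0 then show ?case by simp
next
  case (Suc m)
  then have "concat (map (\<lambda>c. take t (drop (c*t) xs)) [0..<Suc m]) = take (m*t) xs @ take t (drop (m*t) xs)"
    by simp
  also have "\<dots> = take (m*t + t) xs" by (simp add: take_add)
  finally show ?case by (simp add: add.commute)
qed

lemma chunk_concat: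
  assumes "\<And>c. c < m \<Longrightarrow> length (f c) = r" "c < m"
  shows "take r (drop (c*r) (concat (map f [0..<m]))) = f c"
  using assms
proof (induction m)
  case 0 then show ?case by simp
next
  case (Suc m)
  have len: "length (concat (map f [0..<m])) = m * r"
    using Suc.prems(1) by (induction m) auto
  show ?case
  proof (cases "c < m")
    case True
    have "c * r + r \<le> m * r" using True
      by (metis add.commute mult_Suc less_eq_Suc_le mult_le_mono1)
    then have "take r (drop (c*r) (concat (map f [0..<m]) @ f m)) = take r (drop (c*r) (concat (map f [0..<m])))"
      using len by simp
    then show ?thesis using Suc True by simp
  next
    case False
    then have "c = m" using Suc.prems by simp
    then show ?thesis using len Suc.prems by simp
  qed
qed

definition chunk :: "nat \<Rightarrow> (nat \<Rightarrow> nat) \<Rightarrow> (nat \<Rightarrow> bool list) \<Rightarrow> nat \<Rightarrow> bool list" where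
  "chunk c t x = (\<lambda>i. take (t i) (drop (c * t i) (x i)))"

lemma chunk_restr: "chunk c t (restr x B) = restr (chunk c t x) B"
  by (auto simp: chunk_def restr_def)

lemma chunk_msgs:
  assumes "x \<in> msgs S (\<lambda>i. m * t i)" "c < m"
  shows "chunk c t x \<in> msgs S t"
proof -
  have h: "c * t i + t i \<le> m * t i" for i using assms(2)
    by (metis add.commute mult_Suc less_eq_Suc_le mult_le_mono1)
  have "t i \<le> m * t i - c * t i" for i using h[of i] by linarith
  then show ?thesis using assms(1) apply (auto simp: msgs_def chunk_def min_def)
    using le_antisym by blast
qed

lemma repeat_code:
  assumes "index_code S A t r" "m > 0"
  shows "index_code S A (\<lambda>i. m * t i) (m * r)"
proof -
  from assms(1) obtain phi :: "(nat \<Rightarrow> bool list) \<Rightarrow> bool list" and psi :: "nat \<Rightarrow> bool list \<Rightarrow> (nat \<Rightarrow> bool list) \<Rightarrow> bool list" where P: "\<forall>x\<in>msgs S t. length (phi x) = r \<and>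
          (\<forall>j\<in>S. psi j (phi x) (restr x (A j \<inter> S)) = x j)"
    unfolding index_code_def by blast
  define phi' where "phi' x = concat (map (\<lambda>c. phi (chunk c t x)) [0..<m])" for x
  define psi' where "psi' j w y = concat (map (\<lambda>c. psi j (take r (drop (c*r) w)) (chunk c t y)) [0..<m])" for j w y
  show ?thesis unfolding index_code_def
  proof (intro exI ballI conjI)
    fix x assume x: "x \<in> msgs S (\<lambda>i. m * t i)"
    have ch: "\<And>c. c < m \<Longrightarrow> chunk c t x \<in> msgs S t" using chunk_msgs[OF x] by blast
    have lens: "\<And>c. c < m \<Longrightarrow> length (phi (chunk c t x)) = r" using ch P by blast
    have "map (\<lambda>c. length (phi (chunk c t x))) [0..<m] = map (\<lambda>_. r) [0..<m]"
      using lens by (intro map_cong) auto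
    then show "length (phi' x) = m * r" unfolding phi'_def length_concat map_map o_def
      by (simp only: sum_list_triv) simp
    fix j assume j: "j \<in> S"
    have "psi' j (phi' x) (restr x (A j \<inter> S)) = concat (map (\<lambda>c. psi j (phi (chunk c t x)) (restr (chunk c t x) (A j \<inter> S))) [0..<m])"
      unfolding psi'_def phi'_def using chunk_concat[of m "\<lambda>c. phi (chunk c t x)" r] lens
      by (auto simp: chunk_restr intro!: arg_cong[where f=concat] map_cong)
    also have "\<dots> = concat (map (\<lambda>c. take (t j) (drop (c * t j) (x j))) [0..<m])"
      using P ch j by (auto simp: chunk_def intro!: arg_cong[where f=concat] map_cong)
    also have "\<dots> = x j" using concat_chunks[of m "t j" "x j"] x j by (simp add: msgs_def)
    finally show "psi' j (phi' x) (restr x (A j \<inter> S)) = x j" .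
  qed
qed

lemma restrict_code:
  assumes "index_code S A t r" "S1 \<subseteq> S"
  shows "index_code S1 A t r"
proof -
  from assms(1) obtain phi :: "(nat \<Rightarrow> bool list) \<Rightarrow> bool list" and psi :: "nat \<Rightarrow> bool list \<Rightarrow> (nat \<Rightarrow> bool list) \<Rightarrow> bool list" where P:
    "\<forall>x\<in>msgs S t. length (phi x) = r \<and> (\<forall>j\<in>S. psi j (phi x) (restr x (A j \<inter> S)) = x j)"
    unfolding index_code_def by blast
  define ext where "ext x = (\<lambda>k. if k \<in> S1 then x k else if k \<in> S then replicate (t k) False else [])" for x :: "nat \<Rightarrow> bool list"
  define ext2 where "ext2 j y = (\<lambda>k. if k \<in> A j \<inter> S then (if k \<in> S1 then y k else replicate (t k) False) else [])" for j and y :: "nat \<Rightarrow> bool list"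
  show ?thesis unfolding index_code_def
  proof (intro exI ballI conjI)
    fix x assume x: "x \<in> msgs S1 t"
    have ex: "ext x \<in> msgs S t" using x assms(2) by (auto simp: msgs_def ext_def)
    show "length (phi (ext x)) = r" using P ex by blast
    fix j assume j: "j \<in> S1"
    have "ext2 j (restr x (A j \<inter> S1)) = restr (ext x) (A j \<inter> S)"
      using assms(2) by (auto simp: ext2_def ext_def restr_def)
    then show "(\<lambda>w y. psi j w (ext2 j y)) (phi (ext x)) (restr x (A j \<inter> S1)) = x j"
      using P ex j assms(2) by (auto simp: ext_def)
  qed
qed

lemma restrict_achievable:
  assumes "achievable S A R" "S1 \<subseteq> S"
  shows "achievable S1 A (\<lambda>j. if j \<in> S1 then R j else 0)"
  using assms restrict_code unfolding achievable_def by (smt (verit) subsetD)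

lemma xor_xor: "length a = length b \<Longrightarrow> map2 (\<noteq>) (map2 (\<noteq>) a b) b = (a :: bool list)"
  by (induction a b rule: list_induct2) auto

lemma restr_restr: "restr (restr x B) C = restr x (B \<inter> C)"
  by (auto simp: restr_def)

lemma combine_code:
  assumes c1: "index_code S1 A t1 r1" and c2: "index_code S2 A t2 r2"
    and r: "r1 > 0" "r2 > 0" and disj: "S1 \<inter> S2 = {}"
    and e12: "\<forall>j\<in>S1. S2 \<subseteq> A j" and e21: "\<forall>j\<in>S2. S1 \<subseteq> A j"
  shows "index_code (S1 \<union> S2) A (\<lambda>i. if i \<in> S1 then r2 * t1 i else r1 * t2 i) (r1 * r2)"
proof -
  have "index_code S1 A (\<lambda>i. r2 * t1 i) (r2 * r1)" using repeat_code[OF c1 r(2)] .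
  then obtain phi1 :: "(nat \<Rightarrow> bool list) \<Rightarrow> bool list" and psi1 :: "nat \<Rightarrow> bool list \<Rightarrow> (nat \<Rightarrow> bool list) \<Rightarrow> bool list" where P1:
    "\<forall>x\<in>msgs S1 (\<lambda>i. r2 * t1 i). length (phi1 x) = r1 * r2 \<and> (\<forall>j\<in>S1. psi1 j (phi1 x) (restr x (A j \<inter> S1)) = x j)"
    unfolding index_code_def by (auto simp: mult.commute)
  have "index_code S2 A (\<lambda>i. r1 * t2 i) (r1 * r2)" using repeat_code[OF c2 r(1)] .
  then obtain phi2 :: "(nat \<Rightarrow> bool list) \<Rightarrow> bool list" and psi2 :: "nat \<Rightarrow> bool list \<Rightarrow> (nat \<Rightarrow> bool list) \<Rightarrow> bool list" where P2:
    "\<forall>x\<in>msgs S2 (\<lambda>i. r1 * t2 i). length (phi2 x) = r1 * r2 \<and> (\<forall>j\<in>S2. psi2 j (phi2 x) (restr x (A j \<inter> S2)) = x j)"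
    unfolding index_code_def by blast
  let ?S = "S1 \<union> S2"
  let ?t = "\<lambda>i. if i \<in> S1 then r2 * t1 i else r1 * t2 i"
  define phi where "phi x = map2 (\<noteq>) (phi1 (restr x S1)) (phi2 (restr x S2))" for x
  define psi where "psi j w y = (if j \<in> S1 then psi1 j (map2 (\<noteq>) w (phi2 (restr y S2))) (restr y S1)
      else psi2 j (map2 (\<noteq>) w (phi1 (restr y S1))) (restr y S2))" for j w y
  show ?thesis unfolding index_code_def
  proof (intro exI ballI conjI)
    fix x assume x: "x \<in> msgs ?S ?t"
    have x1: "restr x S1 \<in> msgs S1 (\<lambda>i. r2 * t1 i)" using x by (auto simp: msgs_def restr_def)
    have x2: "restr x S2 \<in> msgs S2 (\<lambda>i. r1 * t2 i)" using x disj by (auto simp: msgs_def restr_def)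
    have l1: "length (phi1 (restr x S1)) = r1 * r2" using P1 x1 by blast
    have l2: "length (phi2 (restr x S2)) = r1 * r2" using P2 x2 by blast
    show "length (phi x) = r1 * r2" using l1 l2 by (simp add: phi_def)
    fix j assume j: "j \<in> ?S"
    show "psi j (phi x) (restr x (A j \<inter> ?S)) = x j"
    proof (cases "j \<in> S1")
      case True
      have a: "restr (restr x (A j \<inter> ?S)) S2 = restr x S2" by (rule ext) (use e12 True in \<open>auto simp: restr_def\<close>)
      have b: "restr (restr x (A j \<inter> ?S)) S1 = restr (restr x S1) (A j \<inter> S1)" by (auto simp: restr_def)
      have "psi j (phi x) (restr x (A j \<inter> ?S)) = psi1 j (phi1 (restr x S1)) (restr (restr x S1) (A j \<inter> S1))"
        using True a b l1 l2 xor_xor[of "phi1 (restr x S1)" "phi2 (restr x S2)"] by (simp add: psi_def phi_def)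
      also have "\<dots> = restr x S1 j" using P1 x1 True by blast
      finally show ?thesis using True by (simp add: restr_def)
    next
      case False
      then have j2: "j \<in> S2" using j by blast
      have a: "restr (restr x (A j \<inter> ?S)) S1 = restr x S1" by (rule ext) (use e21 j2 in \<open>auto simp: restr_def\<close>)
      have b: "restr (restr x (A j \<inter> ?S)) S2 = restr (restr x S2) (A j \<inter> S2)" by (auto simp: restr_def)
      have xc: "map2 (\<noteq>) (map2 (\<noteq>) a b) a = b" if "length a = length b" for a b :: "bool list"
        using that by (induction a b rule: list_induct2) auto
      have "psi j (phi x) (restr x (A j \<inter> ?S)) = psi2 j (phi2 (restr x S2)) (restr (restr x S2) (A j \<inter> S2))"
        using False a b l1 l2 xc by (simp add: psi_def phi_def)
      also have "\<dots> = restr x S2 j" using P2 x2 j2 by blast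
      finally show ?thesis using j2 by (simp add: restr_def)
    qed
  qed
qed

lemma combine_achievable:
  assumes a1: "achievable S1 A R1" and a2: "achievable S2 A R2" and disj: "S1 \<inter> S2 = {}"
    and e12: "\<forall>j\<in>S1. S2 \<subseteq> A j" and e21: "\<forall>j\<in>S2. S1 \<subseteq> A j"
  shows "achievable (S1 \<union> S2) A (\<lambda>j. if j \<in> S1 then R1 j else R2 j)"
proof -
  from a1 obtain t1 r1 where A1: "r1 > 0" "index_code S1 A t1 r1" "\<forall>j\<in>S1. R1 j \<le> real (t1 j) / real r1"
    unfolding achievable_def by blast
  from a2 obtain t2 r2 where A2: "r2 > 0" "index_code S2 A t2 r2" "\<forall>j\<in>S2. R2 j \<le> real (t2 j) / real r2"
    unfolding achievable_def by blast
  have code: "index_code (S1 \<union> S2) A (\<lambda>i. if i \<in> S1 then r2 * t1 i else r1 * t2 i) (r1 * r2)"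
    using combine_code[OF A1(2) A2(2) A1(1) A2(1) disj e12 e21] .
  have rate: "(if j \<in> S1 then R1 j else R2 j) \<le> real (if j \<in> S1 then r2 * t1 j else r1 * t2 j) / real (r1 * r2)"
    if "j \<in> S1 \<union> S2" for j
  proof (cases "j \<in> S1")
    case True
    have "real (r2 * t1 j) / real (r1 * r2) = real (t1 j) / real r1" using A2(1) by simp
    then show ?thesis using True A1(3) by simp
  next
    case False
    have "real (r1 * t2 j) / real (r1 * r2) = real (t2 j) / real r2" using A1(1) by simp
    then show ?thesis using False that A2(3) by simp
  qed
  have van: "\<forall>j. j \<notin> S1 \<union> S2 \<longrightarrow> (if j \<in> S1 then R1 j else R2 j) = 0"
    using a1 a2 by (auto simp: achievable_def)
  have nn: "\<forall>j\<in>S1 \<union> S2. 0 \<le> (if j \<in> S1 then R1 j else R2 j)"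
    using a1 a2 by (auto simp: achievable_def)
  show ?thesis unfolding achievable_def
    by (intro conjI van nn exI[of _ "(\<lambda>i. if i \<in> S1 then r2 * t1 i else r1 * t2 i)"] exI[of _ "r1*r2"])
      (use code rate A1(1) A2(1) in auto)
qed


lemma closed_vanish: "closed {R :: nat \<Rightarrow> real. \<forall>j. j \<notin> T \<longrightarrow> R j = 0}"
proof -
  have eq: "{R :: nat \<Rightarrow> real. \<forall>j. j \<notin> T \<longrightarrow> R j = 0} = (\<Inter>j\<in>-T. {R. R j = 0})" by auto
  have cl: "closed {R :: nat \<Rightarrow> real. R j = 0}" for j
    by (rule closed_Collect_eq) (simp_all add: continuous_on_product_coordinates)
  show ?thesis unfolding eq using cl by (intro closed_INT) blast
qed

lemma capacity_vanish: "capacity T A \<subseteq> {R. \<forall>j. j \<notin> T \<longrightarrow> R j = 0}"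
  unfolding capacity_def
  by (rule closure_minimal[OF _ closed_vanish]) (auto simp: achievable_def)

lemma cont_proj: "continuous_on UNIV (\<lambda>(R :: nat \<Rightarrow> real) j. if j \<in> T then R j else 0)"
proof (rule continuous_on_coordinatewise_then_product)
  fix j show "continuous_on UNIV (\<lambda>R :: nat \<Rightarrow> real. if j \<in> T then R j else 0)"
    by (cases "j \<in> T") simp_all
qed

lemma cont_cmb: "continuous_on UNIV (\<lambda>p :: (nat \<Rightarrow> real) \<times> (nat \<Rightarrow> real). (\<lambda>j. if j \<le> n1 then fst p j else snd p j))"
proof (rule continuous_on_coordinatewise_then_product)
  fix j
  have f: "continuous_on UNIV (\<lambda>p :: (nat \<Rightarrow> real) \<times> (nat \<Rightarrow> real). fst p j)"
    using continuous_on_compose2[OF continuous_on_product_coordinates continuous_on_fst[OF continuous_on_id]]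
    by auto
  have s: "continuous_on UNIV (\<lambda>p :: (nat \<Rightarrow> real) \<times> (nat \<Rightarrow> real). snd p j)"
    using continuous_on_compose2[OF continuous_on_product_coordinates continuous_on_snd[OF continuous_on_id]]
    by auto
  show "continuous_on UNIV (\<lambda>p :: (nat \<Rightarrow> real) \<times> (nat \<Rightarrow> real). if j \<le> n1 then fst p j else snd p j)"
    using f s by (cases "j \<le> n1") auto
qed

lemma proj_capacity:
  assumes "R \<in> capacity S A" "T \<subseteq> S"
  shows "(\<lambda>j. if j \<in> T then R j else 0) \<in> capacity T A"
proof -
  have "(\<lambda>R j. if j \<in> T then R j else 0) ` closure {R. achievable S A R} \<subseteq> capacity T A"
    unfolding capacity_def
  proof (rule image_closure_subset)
    show "continuous_on (closure {R. achievable S A R}) (\<lambda>R j. if j \<in> T then R j else 0)"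
      by (rule continuous_on_subset[OF cont_proj]) simp
    show "(\<lambda>R j. if j \<in> T then R j else 0) ` {R. achievable S A R} \<subseteq> closure {R. achievable T A R}"
    proof (rule subsetI)
      fix y assume "y \<in> (\<lambda>R j. if j \<in> T then R j else 0) ` {R. achievable S A R}"
      then obtain R where R: "achievable S A R" and y: "y = (\<lambda>j. if j \<in> T then R j else 0)" by blast
      have "achievable T A y" unfolding y by (rule restrict_achievable[OF R assms(2)])
      then show "y \<in> closure {R. achievable T A R}" by (intro closure_subset[THEN subsetD]) simp
    qed
  qed (rule closed_closure)
  then show ?thesis using assms(1) unfolding capacity_def by (simp add: image_subset_iff)
qed


theorem theorem3:
  fixes n n1 :: nat and A :: "nat \<Rightarrow> nat set"
  assumes side_info: "\<forall>j\<in>{1..n}. A j \<subseteq> {1..n} - {j}"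
    and n1_ge: "1 \<le> n1" and n1_lt: "n1 < n"
    and edges12: "\<forall>j\<in>{1..n1}. {n1+1..n} \<subseteq> A j"
    and edges21: "\<forall>j\<in>{n1+1..n}. {1..n1} \<subseteq> A j"
  shows "capacity {1..n} A =
     {(\<lambda>j. if j \<le> n1 then R1 j else R2 j) | R1 R2.
        R1 \<in> capacity {1..n1} A \<and> R2 \<in> capacity {n1+1..n} A}"
proof
  let ?S1 = "{1..n1}" and ?S2 = "{n1+1..n}"
  have SU: "{1..n} = ?S1 \<union> ?S2" using n1_lt by auto
  have disj: "?S1 \<inter> ?S2 = {}" by auto
  show "capacity {1..n} A \<subseteq> {(\<lambda>j. if j \<le> n1 then R1 j else R2 j) | R1 R2.
        R1 \<in> capacity {1..n1} A \<and> R2 \<in> capacity {n1+1..n} A}"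
  proof (rule subsetI)
    fix R assume R: "R \<in> capacity {1..n} A"
    have c1: "(\<lambda>j. if j \<in> ?S1 then R j else 0) \<in> capacity ?S1 A"
      by (rule proj_capacity[OF R]) (use n1_lt in auto)
    have c2: "(\<lambda>j. if j \<in> ?S2 then R j else 0) \<in> capacity ?S2 A"
      by (rule proj_capacity[OF R]) (use n1_lt in auto)
    have van: "\<forall>j. j \<notin> {1..n} \<longrightarrow> R j = 0" using capacity_vanish R by blast
    have eq: "R = (\<lambda>j. if j \<le> n1 then (\<lambda>j. if j \<in> ?S1 then R j else 0) j else (\<lambda>j. if j \<in> ?S2 then R j else 0) j)"
    proof (rule ext)
      fix j show "R j = (if j \<le> n1 then (\<lambda>j. if j \<in> ?S1 then R j else 0) j else (\<lambda>j. if j \<in> ?S2 then R j else 0) j)"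
        using van n1_lt by (cases "j = 0"; cases "j \<le> n1"; cases "j \<le> n") auto
    qed
    then show "R \<in> {(\<lambda>j. if j \<le> n1 then R1 j else R2 j) | R1 R2.
        R1 \<in> capacity {1..n1} A \<and> R2 \<in> capacity {n1+1..n} A}"
      apply (intro CollectI exI conjI)
        apply (rule eq)
       apply (rule c1)
      apply (rule c2)
      done
  qed
  show "{(\<lambda>j. if j \<le> n1 then R1 j else R2 j) | R1 R2.
        R1 \<in> capacity {1..n1} A \<and> R2 \<in> capacity {n1+1..n} A} \<subseteq> capacity {1..n} A"
  proof (rule subsetI)
    fix R assume "R \<in> {(\<lambda>j. if j \<le> n1 then R1 j else R2 j) | R1 R2.
        R1 \<in> capacity {1..n1} A \<and> R2 \<in> capacity {n1+1..n} A}"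
    then obtain R1 R2 where R: "R = (\<lambda>j. if j \<le> n1 then R1 j else R2 j)"
      and R1: "R1 \<in> capacity ?S1 A" and R2: "R2 \<in> capacity ?S2 A" by blast
    let ?F = "\<lambda>p :: (nat \<Rightarrow> real) \<times> (nat \<Rightarrow> real). (\<lambda>j. if j \<le> n1 then fst p j else snd p j)"
    have mem: "(R1, R2) \<in> closure ({R. achievable ?S1 A R} \<times> {R. achievable ?S2 A R})"
      using R1 R2 unfolding closure_Times capacity_def by simp
    have "?F ` closure ({R. achievable ?S1 A R} \<times> {R. achievable ?S2 A R}) \<subseteq> closure {R. achievable {1..n} A R}"
    proof (rule image_closure_subset)
      show "continuous_on (closure ({R. achievable ?S1 A R} \<times> {R. achievable ?S2 A R})) ?F"
        by (rule continuous_on_subset[OF cont_cmb]) simp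
      show "?F ` ({R. achievable ?S1 A R} \<times> {R. achievable ?S2 A R}) \<subseteq> closure {R. achievable {1..n} A R}"
      proof (rule subsetI)
        fix y assume "y \<in> ?F ` ({R. achievable ?S1 A R} \<times> {R. achievable ?S2 A R})"
        then obtain a b where a: "achievable ?S1 A a" and b: "achievable ?S2 A b" and y: "y = ?F (a, b)"
          by auto
        have ab: "achievable (?S1 \<union> ?S2) A (\<lambda>j. if j \<in> ?S1 then a j else b j)"
          by (rule combine_achievable[OF a b disj]) (use edges12 edges21 in auto)
        have va: "a 0 = 0" using a by (auto simp: achievable_def)
        have vb: "b 0 = 0" using b by (auto simp: achievable_def)
        have "y = (\<lambda>j. if j \<in> ?S1 then a j else b j)"
        proof (rule ext)
          fix j show "y j = (if j \<in> ?S1 then a j else b j)"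
            using va vb y by (cases "j = 0") auto
        qed
        then have "achievable {1..n} A y" using ab SU by simp
        then show "y \<in> closure {R. achievable {1..n} A R}" by (intro closure_subset[THEN subsetD]) simp
      qed
    qed (rule closed_closure)
    then have "?F (R1, R2) \<in> capacity {1..n} A" using mem unfolding capacity_def by (simp add: image_subset_iff)
    moreover have "?F (R1, R2) = R" unfolding R by (rule ext) simp
    ultimately show "R \<in> capacity {1..n} A" by simp
  qed
qed
end
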